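(* Let $H$ be obtained from $F_4$ by adding a new vertex $v$ and joining it to three distinct vertices of $F_4$; let $S$ be the set of these three neighbours. If $H$ does not contain $K_{3,4}$ as a minor, then either $S$ contains two vertices adjacent in $F_4$, or $S=\{f^1_1,f^1_4,f^2\}$, or $S=\{f^2_1,f^2_4,f^1\}$. Moreover, if $S=\{f^1_1,f^1_4,f^2\}$ or $S=\{f^2_1,f^2_4,f^1\}$, then $H$ contains $\mathfrak{Q}^+$ as a minor.
   Context: $F_4$ is the graph with vertex set $\{f^1,f^2\}\cup\{f^i_j: i\in\{1,2\}, j\in\{1,2,3,4\}\}$ and the 16 edges: for each $i\in\{1,2\}$, $f^if^i_1$, $f^if^i_2$, $f^if^i_4$, $f^i_3f^i_1$, $f^i_3f^i_2$, $f^i_3f^i_4$; and $f^1_jf^2_{5-j}$ for $j=1,2,3,4$. $\mathfrak{Q}^+$ is the graph obtained from the cube $Q_3$ by adding a new vertex adjacent to three pairwise non-adjacent vertices of the cube. *)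

theory Defs
  imports Main
begin

definition simple_graph :: "'a set \<Rightarrow> ('a \<Rightarrow> 'a \<Rightarrow> bool) \<Rightarrow> bool" where
  "simple_graph V E \<longleftrightarrow> finite V \<and> (\<forall>x y. E x y \<longrightarrow> x \<in> V \<and> y \<in> V \<and> x \<noteq> y \<and> E y x)"

definition connected_in :: "('a \<Rightarrow> 'a \<Rightarrow> bool) \<Rightarrow> 'a set \<Rightarrow> bool" where
  "connected_in E X \<longleftrightarrow> X \<noteq> {} \<and>
     (\<forall>x\<in>X. \<forall>y\<in>X. (\<lambda>a b. a \<in> X \<and> b \<in> X \<and> E a b)\<^sup>*\<^sup>* x y)"

definition has_minor :: "'a set \<Rightarrow> ('a \<Rightarrow> 'a \<Rightarrow> bool) \<Rightarrow> 'b set \<Rightarrow> ('b \<Rightarrow> 'b \<Rightarrow> bool) \<Rightarrow> bool" where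
  "has_minor VG EG VH EH \<longleftrightarrow> (\<exists>\<phi> :: 'b \<Rightarrow> 'a set.
     (\<forall>x\<in>VH. \<phi> x \<subseteq> VG \<and> connected_in EG (\<phi> x)) \<and>
     (\<forall>x\<in>VH. \<forall>y\<in>VH. x \<noteq> y \<longrightarrow> \<phi> x \<inter> \<phi> y = {}) \<and>
     (\<forall>x\<in>VH. \<forall>y\<in>VH. EH x y \<longrightarrow> (\<exists>a\<in>\<phi> x. \<exists>b\<in>\<phi> y. EG a b)))"

text \<open>Top i stands for f^i, Sub i j for f^i_j.\<close>
datatype f4v = Top nat | Sub nat nat

definition F4_V :: "f4v set" where
  "F4_V = {Top 1, Top 2} \<union> {Sub i j | i j. i \<in> {1,2} \<and> j \<in> {1,2,3,4}}"

definition F4_edges :: "(f4v \<times> f4v) set" where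
  "F4_edges = (\<Union>i\<in>{1,2}. {(Top i, Sub i 1), (Top i, Sub i 2), (Top i, Sub i 4),
                            (Sub i 3, Sub i 1), (Sub i 3, Sub i 2), (Sub i 3, Sub i 4)})
              \<union> {(Sub 1 j, Sub 2 (5 - j)) | j. j \<in> {1,2,3,4}}"

definition F4_E :: "f4v \<Rightarrow> f4v \<Rightarrow> bool" where
  "F4_E x y \<longleftrightarrow> (x, y) \<in> F4_edges \<or> (y, x) \<in> F4_edges"

text \<open>H: F_4 plus a new vertex None adjacent to the vertices in S.\<close>
definition H_V :: "f4v option set" where
  "H_V = insert None (Some ` F4_V)"

definition H_E :: "f4v set \<Rightarrow> f4v option \<Rightarrow> f4v option \<Rightarrow> bool" where
  "H_E S x y \<longleftrightarrow>
     (case (x, y) of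
        (Some a, Some b) \<Rightarrow> F4_E a b
      | (None, Some b) \<Rightarrow> b \<in> S
      | (Some a, None) \<Rightarrow> a \<in> S
      | (None, None) \<Rightarrow> False)"

definition K34_V :: "(nat + nat) set" where
  "K34_V = Inl ` {..<3} \<union> Inr ` {..<4}"

definition K34_E :: "(nat + nat) \<Rightarrow> (nat + nat) \<Rightarrow> bool" where
  "K34_E x y \<longleftrightarrow> (\<exists>i j. (x = Inl i \<and> y = Inr j) \<or> (x = Inr j \<and> y = Inl i))"

text \<open>Cube vertices 0..7 (binary encodings), adjacent iff they differ in one bit.
  Vertex 8 is adjacent to 3 (011), 5 (101), 6 (110), which are pairwise non-adjacent;
  all such triples are equivalent under cube automorphisms.\<close>
definition Qp_V :: "nat set" where
  "Qp_V = {0..8}"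

definition Qp_edges :: "(nat \<times> nat) set" where
  "Qp_edges = {(0,1),(0,2),(0,4),(1,3),(1,5),(2,3),(2,6),(3,7),(4,5),(4,6),(5,7),(6,7),
               (8,3),(8,5),(8,6)}"

definition Qp_E :: "nat \<Rightarrow> nat \<Rightarrow> bool" where
  "Qp_E x y \<longleftrightarrow> (x, y) \<in> Qp_edges \<or> (y, x) \<in> Qp_edges"

end

theory Submission
  imports Defs
begin


lemma conn_single: "connected_in E {a}"
  unfolding connected_in_def by auto

lemma conn_insert:
  assumes c: "connected_in E X" and ex: "\<exists>a\<in>X. E a b \<and> E b a"
  shows "connected_in E (insert b X)"
proof -
  obtain a where a: "a \<in> X" "E a b" "E b a" using ex by blast
  let ?R = "\<lambda>u v. u \<in> X \<and> v \<in> X \<and> E u v"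
  let ?R' = "\<lambda>u v. u \<in> insert b X \<and> v \<in> insert b X \<and> E u v"
  have mono: "?R\<^sup>*\<^sup>* x y \<Longrightarrow> ?R'\<^sup>*\<^sup>* x y" for x y
    by (induction rule: rtranclp_induct) (auto intro: rtranclp.rtrancl_into_rtrancl)
  have ab: "?R'\<^sup>*\<^sup>* a b" "?R'\<^sup>*\<^sup>* b a" using a by auto
  have X: "\<forall>x\<in>X. \<forall>y\<in>X. ?R\<^sup>*\<^sup>* x y" using c unfolding connected_in_def by blast
  show ?thesis unfolding connected_in_def
  proof (intro conjI ballI)
    fix x y assume x: "x \<in> insert b X" and y: "y \<in> insert b X"
    show "?R'\<^sup>*\<^sup>* x y"
    proof (cases "x = b")
      case True
      show ?thesis
      proof (cases "y = b")
        case True with \<open>x = b\<close> show ?thesis by simp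
      next
        case False
        then have "y \<in> X" using y by simp
        then have "?R'\<^sup>*\<^sup>* a y" using mono X a by blast
        then show ?thesis using ab \<open>x = b\<close> by (meson rtranclp_trans)
      qed
    next
      case False
      then have xX: "x \<in> X" using x by simp
      show ?thesis
      proof (cases "y = b")
        case True
        have "?R'\<^sup>*\<^sup>* x a" using mono X a xX by blast
        then show ?thesis using ab True by (meson rtranclp_trans)
      next
        case False
        then have "y \<in> X" using y by simp
        then show ?thesis using mono X xX by blast
      qed
    qed
  qed simp
qed

lemma F4_V_eq: "F4_V = {Top 1, Top 2, Sub 1 1, Sub 1 2, Sub 1 3, Sub 1 4, Sub 2 1, Sub 2 2, Sub 2 3, Sub 2 4}"
  unfolding F4_V_def by auto

lemma F4_match: "{(Sub 1 j, Sub 2 (5 - j)) | j. j \<in> {1,2,3,4::nat}} = {(Sub 1 1, Sub 2 4), (Sub 1 2, Sub 2 3), (Sub 1 3, Sub 2 2), (Sub 1 4, Sub 2 1)}"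
  by auto
lemma F4_edges_eq: "F4_edges = {(Sub 1 1, Sub 2 4), (Sub 1 2, Sub 2 3), (Sub 1 3, Sub 2 2), (Sub 1 4, Sub 2 1),
   (Top 2, Sub 2 1), (Top 2, Sub 2 2), (Top 2, Sub 2 4),
   (Sub 2 3, Sub 2 1), (Sub 2 3, Sub 2 2), (Sub 2 3, Sub 2 4),
   (Top 1, Sub 1 1), (Top 1, Sub 1 2), (Top 1, Sub 1 4),
   (Sub 1 3, Sub 1 1), (Sub 1 3, Sub 1 2), (Sub 1 3, Sub 1 4)}"
  unfolding F4_edges_def F4_match by simp

lemma K34_V_eq: "K34_V = {Inl 0, Inl 1, Inl 2, Inr 0, Inr 1, Inr 2, Inr 3}"
  unfolding K34_V_def by (simp add: lessThan_nat_numeral lessThan_Suc insert_commute)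

lemma Qp_V_eq: "Qp_V = {0,1,2,3,4,5,6,7,8}"
  unfolding Qp_V_def by auto

lemmas G_simps = H_V_def F4_V_eq H_E_def F4_E_def F4_edges_eq K34_V_eq K34_E_def Qp_V_eq Qp_E_def Qp_edges_def

lemma dsym: "A \<inter> B = {} \<Longrightarrow> B \<inter> A = {}" by blast

lemma ex_sym: "\<exists>a\<in>X. \<exists>b\<in>Y. E a b \<Longrightarrow> (\<And>x y. E x y \<Longrightarrow> E y x) \<Longrightarrow> \<exists>a\<in>Y. \<exists>b\<in>X. E a b"
  by blast

lemma K34_intro:
  assumes sym: "\<And>x y. E x y \<Longrightarrow> E y x"
   and sub: "Pa \<subseteq> VG" "Pb \<subseteq> VG" "Pc \<subseteq> VG" "Qa \<subseteq> VG" "Qb \<subseteq> VG" "Qc \<subseteq> VG" "Qd \<subseteq> VG"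
   and con: "connected_in E Pa" "connected_in E Pb" "connected_in E Pc" "connected_in E Qa" "connected_in E Qb" "connected_in E Qc" "connected_in E Qd"
   and dis: "Pa \<inter> Pb = {}" "Pa \<inter> Pc = {}" "Pa \<inter> Qa = {}" "Pa \<inter> Qb = {}" "Pa \<inter> Qc = {}" "Pa \<inter> Qd = {}" "Pb \<inter> Pc = {}" "Pb \<inter> Qa = {}" "Pb \<inter> Qb = {}" "Pb \<inter> Qc = {}" "Pb \<inter> Qd = {}" "Pc \<inter> Qa = {}" "Pc \<inter> Qb = {}" "Pc \<inter> Qc = {}" "Pc \<inter> Qd = {}" "Qa \<inter> Qb = {}" "Qa \<inter> Qc = {}" "Qa \<inter> Qd = {}" "Qb \<inter> Qc = {}" "Qb \<inter> Qd = {}" "Qc \<inter> Qd = {}"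
   and ed: "\<exists>a\<in>Pa. \<exists>b\<in>Qa. E a b" "\<exists>a\<in>Pa. \<exists>b\<in>Qb. E a b" "\<exists>a\<in>Pa. \<exists>b\<in>Qc. E a b" "\<exists>a\<in>Pa. \<exists>b\<in>Qd. E a b" "\<exists>a\<in>Pb. \<exists>b\<in>Qa. E a b" "\<exists>a\<in>Pb. \<exists>b\<in>Qb. E a b" "\<exists>a\<in>Pb. \<exists>b\<in>Qc. E a b" "\<exists>a\<in>Pb. \<exists>b\<in>Qd. E a b" "\<exists>a\<in>Pc. \<exists>b\<in>Qa. E a b" "\<exists>a\<in>Pc. \<exists>b\<in>Qb. E a b" "\<exists>a\<in>Pc. \<exists>b\<in>Qc. E a b" "\<exists>a\<in>Pc. \<exists>b\<in>Qd. E a b"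
  shows "has_minor VG E K34_V K34_E"
proof -
  note ed' = ed[THEN ex_sym[OF _ sym]]
  note dis' = dis[THEN dsym]
  define \<phi> where "\<phi> = (\<lambda>x::nat+nat. if x = Inl 0 then Pa else if x = Inl 1 then Pb else if x = Inl 2 then Pc
     else if x = Inr 0 then Qa else if x = Inr 1 then Qb else if x = Inr 2 then Qc else (Qd::'a set))"
  have p: "\<phi> (Inl 0) = Pa" "\<phi> (Inl 1) = Pb" "\<phi> (Inl 2) = Pc" "\<phi> (Inr 0) = Qa" "\<phi> (Inr 1) = Qb"
     "\<phi> (Inr 2) = Qc" "\<phi> (Inr 3) = Qd" "\<phi> (Inl (Suc 0)) = Pb" "\<phi> (Inr (Suc 0)) = Qb" unfolding \<phi>_def by simp_all
  show ?thesis unfolding has_minor_def K34_V_eq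
  apply (rule exI[of _ \<phi>])
  proof (intro conjI)
    show "\<forall>x\<in>{Inl 0, Inl 1, Inl 2, Inr 0, Inr 1, Inr 2, Inr 3}. \<phi> x \<subseteq> VG \<and> connected_in E (\<phi> x)"
      using sub con by (simp add: p)
    show "\<forall>x\<in>{Inl 0, Inl 1, Inl 2, Inr 0, Inr 1, Inr 2, Inr 3}. \<forall>y\<in>{Inl 0, Inl 1, Inl 2, Inr 0, Inr 1, Inr 2, Inr 3}. x \<noteq> y \<longrightarrow> \<phi> x \<inter> \<phi> y = {}"
      using dis dis' by (simp add: p)
    show "\<forall>x\<in>{Inl 0, Inl 1, Inl 2, Inr 0, Inr 1, Inr 2, Inr 3}. \<forall>y\<in>{Inl 0, Inl 1, Inl 2, Inr 0, Inr 1, Inr 2, Inr 3}. K34_E x y \<longrightarrow> (\<exists>a\<in>\<phi> x. \<exists>b\<in>\<phi> y. E a b)"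
      using ed ed' by (simp add: p K34_E_def)
  qed
qed

lemma H_E_sym: "H_E S x y \<Longrightarrow> H_E S y x"
  unfolding H_E_def F4_E_def by (auto split: option.splits)

lemmas HS = H_V_def F4_V_eq H_E_def F4_E_def F4_edges_eq

lemma H_E_simps[simp]: "H_E S (Some a) (Some b) = F4_E a b" "H_E S None (Some b) = (b \<in> S)" "H_E S (Some a) None = (a \<in> S)" "H_E S None None = False"
  by (simp_all add: H_E_def)
lemma F4_E_eq: "F4_E x y \<longleftrightarrow> (x, y) \<in> F4_edges \<or> (y, x) \<in> F4_edges" by (simp add: F4_E_def)
lemma "{Some (Top 1)} \<subseteq> H_V" "{Some (Sub 1 4), Some (Sub 2 1)} \<subseteq> H_V" by (simp_all add: H_V_def F4_V_eq)
lemma "connected_in (H_E {Top 1, Top 2, Sub 1 3}) {Some (Sub 1 4), Some (Sub 2 1)}"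
  by (intro conn_insert conn_single; simp add: F4_E_eq F4_edges_eq)
lemma "\<exists>a\<in>{Some (Top 2), None}. \<exists>b\<in>{Some (Sub 1 4), Some (Sub 2 1)}. H_E {Top 1, Top 2, Sub 1 3} a b"
  by (simp add: F4_E_eq F4_edges_eq)
lemma "{Some (Top 2), None} \<inter> {Some (Sub 1 4), Some (Sub 2 1)} = {}"
  by simp
lemma Qp_intro:
  assumes sym: "\<And>x y. E x y \<Longrightarrow> E y x"
   and sub: "Ra \<subseteq> VG" "Rb \<subseteq> VG" "Rc \<subseteq> VG" "Rd \<subseteq> VG" "Re \<subseteq> VG" "Rf \<subseteq> VG" "Rg \<subseteq> VG" "Rh \<subseteq> VG" "Ri \<subseteq> VG"
   and con: "connected_in E Ra" "connected_in E Rb" "connected_in E Rc" "connected_in E Rd" "connected_in E Re" "connected_in E Rf" "connected_in E Rg" "connected_in E Rh" "connected_in E Ri"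
   and dis: "Ra \<inter> Rb = {}" "Ra \<inter> Rc = {}" "Ra \<inter> Rd = {}" "Ra \<inter> Re = {}" "Ra \<inter> Rf = {}" "Ra \<inter> Rg = {}" "Ra \<inter> Rh = {}" "Ra \<inter> Ri = {}" "Rb \<inter> Rc = {}" "Rb \<inter> Rd = {}" "Rb \<inter> Re = {}" "Rb \<inter> Rf = {}" "Rb \<inter> Rg = {}" "Rb \<inter> Rh = {}" "Rb \<inter> Ri = {}" "Rc \<inter> Rd = {}" "Rc \<inter> Re = {}" "Rc \<inter> Rf = {}" "Rc \<inter> Rg = {}" "Rc \<inter> Rh = {}" "Rc \<inter> Ri = {}" "Rd \<inter> Re = {}" "Rd \<inter> Rf = {}" "Rd \<inter> Rg = {}" "Rd \<inter> Rh = {}" "Rd \<inter> Ri = {}" "Re \<inter> Rf = {}" "Re \<inter> Rg = {}" "Re \<inter> Rh = {}" "Re \<inter> Ri = {}" "Rf \<inter> Rg = {}" "Rf \<inter> Rh = {}" "Rf \<inter> Ri = {}" "Rg \<inter> Rh = {}" "Rg \<inter> Ri = {}" "Rh \<inter> Ri = {}"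
   and ed: "\<exists>a\<in>Ra. \<exists>b\<in>Rb. E a b" "\<exists>a\<in>Ra. \<exists>b\<in>Rc. E a b" "\<exists>a\<in>Ra. \<exists>b\<in>Re. E a b" "\<exists>a\<in>Rb. \<exists>b\<in>Rd. E a b" "\<exists>a\<in>Rb. \<exists>b\<in>Rf. E a b" "\<exists>a\<in>Rc. \<exists>b\<in>Rd. E a b" "\<exists>a\<in>Rc. \<exists>b\<in>Rg. E a b" "\<exists>a\<in>Rd. \<exists>b\<in>Rh. E a b" "\<exists>a\<in>Re. \<exists>b\<in>Rf. E a b" "\<exists>a\<in>Re. \<exists>b\<in>Rg. E a b" "\<exists>a\<in>Rf. \<exists>b\<in>Rh. E a b" "\<exists>a\<in>Rg. \<exists>b\<in>Rh. E a b" "\<exists>a\<in>Ri. \<exists>b\<in>Rd. E a b" "\<exists>a\<in>Ri. \<exists>b\<in>Rf. E a b" "\<exists>a\<in>Ri. \<exists>b\<in>Rg. E a b"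
  shows "has_minor VG E Qp_V Qp_E"
proof -
  note ed' = ed[THEN ex_sym[OF _ sym]]
  note dis' = dis[THEN dsym]
  define \<phi> where "\<phi> = (\<lambda>n::nat. if n = 0 then Ra else if n = 1 then Rb else if n = 2 then Rc else if n = 3 then Rd else if n = 4 then Re else if n = 5 then Rf else if n = 6 then Rg else if n = 7 then Rh else Ri)"
  have p: "\<phi> 0 = Ra" "\<phi> 1 = Rb" "\<phi> 2 = Rc" "\<phi> 3 = Rd" "\<phi> 4 = Re" "\<phi> 5 = Rf" "\<phi> 6 = Rg" "\<phi> 7 = Rh" "\<phi> 8 = Ri" "\<phi> (Suc 0) = Rb" unfolding \<phi>_def by simp_all
  show ?thesis unfolding has_minor_def Qp_V_eq
    apply (rule exI[of _ \<phi>])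
  proof (intro conjI)
    show "\<forall>x\<in>{0, 1, 2, 3, 4, 5, 6, 7, 8}. \<phi> x \<subseteq> VG \<and> connected_in E (\<phi> x)"
      using sub con by (simp add: p)
    show "\<forall>x\<in>{0, 1, 2, 3, 4, 5, 6, 7, 8}. \<forall>y\<in>{0, 1, 2, 3, 4, 5, 6, 7, 8}. x \<noteq> y \<longrightarrow> \<phi> x \<inter> \<phi> y = {}"
      using dis dis' by (simp add: p)
    show "\<forall>x\<in>{0, 1, 2, 3, 4, 5, 6, 7, 8}. \<forall>y\<in>{0, 1, 2, 3, 4, 5, 6, 7, 8}. Qp_E x y \<longrightarrow> (\<exists>a\<in>\<phi> x. \<exists>b\<in>\<phi> y. E a b)"
      using ed ed' by (simp add: p Qp_E_def Qp_edges_def)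
  qed
qed

lemmas HS2 = H_V_def F4_V_eq F4_E_eq F4_edges_eq

lemma kmin0: "has_minor H_V (H_E {Sub 1 1, Sub 1 2, Sub 1 4}) K34_V K34_E"
  by (rule K34_intro[where Pa="{Some (Sub 2 4), Some (Sub 1 1)}" and Pb="{Some (Sub 1 2)}" and Pc="{Some (Sub 2 1), Some (Sub 1 4)}" and Qa="{Some (Top 1)}" and Qb="{Some (Sub 1 3)}" and Qc="{Some (Sub 2 3)}" and Qd="{None}", OF H_E_sym];
     (intro conn_single conn_insert)?; simp add: HS2)

lemma kmin1: "has_minor H_V (H_E {Sub 1 1, Sub 1 2, Sub 2 1}) K34_V K34_E"
  by (rule K34_intro[where Pa="{Some (Sub 2 4), Some (Sub 1 1)}" and Pb="{Some (Sub 1 2)}" and Pc="{Some (Sub 2 1), Some (Sub 1 4)}" and Qa="{Some (Top 1)}" and Qb="{Some (Sub 1 3)}" and Qc="{Some (Sub 2 3)}" and Qd="{None}", OF H_E_sym];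
     (intro conn_single conn_insert)?; simp add: HS2)

lemma kmin2: "has_minor H_V (H_E {Sub 1 1, Sub 1 2, Sub 2 2}) K34_V K34_E"
  by (rule K34_intro[where Pa="{Some (Sub 1 1), Some (Top 1)}" and Pb="{Some (Sub 1 2), Some (Sub 2 3)}" and Pc="{Some (Top 2), Some (Sub 2 2)}" and Qa="{Some (Sub 1 3)}" and Qb="{Some (Sub 2 1), Some (Sub 1 4)}" and Qc="{Some (Sub 2 4)}" and Qd="{None}", OF H_E_sym];
     (intro conn_single conn_insert)?; simp add: HS2)

lemma kmin3: "has_minor H_V (H_E {Sub 1 1, Sub 1 4, Sub 2 2}) K34_V K34_E"
  by (rule K34_intro[where Pa="{Some (Sub 2 4), Some (Sub 1 1)}" and Pb="{Some (Sub 2 1), Some (Sub 1 4)}" and Pc="{Some (Sub 2 2)}" and Qa="{Some (Top 2)}" and Qb="{Some (Sub 1 3)}" and Qc="{Some (Sub 2 3)}" and Qd="{None}", OF H_E_sym];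
     (intro conn_single conn_insert)?; simp add: HS2)

lemma kmin4: "has_minor H_V (H_E {Sub 1 1, Sub 1 4, Sub 2 3}) K34_V K34_E"
  by (rule K34_intro[where Pa="{Some (Sub 1 1)}" and Pb="{Some (Sub 1 2), Some (Sub 2 3)}" and Pc="{Some (Sub 2 1), Some (Sub 1 4)}" and Qa="{Some (Top 1)}" and Qb="{Some (Sub 2 4), Some (Top 2)}" and Qc="{Some (Sub 1 3)}" and Qd="{None}", OF H_E_sym];
     (intro conn_single conn_insert)?; simp add: HS2)

lemma kmin5: "has_minor H_V (H_E {Sub 1 1, Sub 2 1, Sub 2 2}) K34_V K34_E"
  by (rule K34_intro[where Pa="{Some (Sub 2 4), Some (Sub 1 1)}" and Pb="{Some (Sub 2 1), Some (Sub 1 4)}" and Pc="{Some (Sub 2 2)}" and Qa="{Some (Top 2)}" and Qb="{Some (Sub 1 3)}" and Qc="{Some (Sub 2 3)}" and Qd="{None}", OF H_E_sym];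
     (intro conn_single conn_insert)?; simp add: HS2)

lemma kmin6: "has_minor H_V (H_E {Sub 1 2, Sub 1 4, Sub 2 2}) K34_V K34_E"
  by (rule K34_intro[where Pa="{Some (Sub 2 4), Some (Sub 1 2), Some (Sub 1 1), Some (Top 1)}" and Pb="{Some (Sub 2 1), Some (Sub 1 4)}" and Pc="{Some (Sub 2 2)}" and Qa="{Some (Top 2)}" and Qb="{Some (Sub 1 3)}" and Qc="{Some (Sub 2 3)}" and Qd="{None}", OF H_E_sym];
     (intro conn_single conn_insert)?; simp add: HS2)

lemma kmin7: "has_minor H_V (H_E {Sub 1 2, Sub 1 4, Sub 2 4}) K34_V K34_E"
  by (rule K34_intro[where Pa="{Some (Sub 2 4), Some (Sub 1 1)}" and Pb="{Some (Sub 1 2)}" and Pc="{Some (Sub 2 1), Some (Sub 1 4)}" and Qa="{Some (Top 1)}" and Qb="{Some (Sub 1 3)}" and Qc="{Some (Sub 2 3)}" and Qd="{None}", OF H_E_sym];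
     (intro conn_single conn_insert)?; simp add: HS2)

lemma kmin8: "has_minor H_V (H_E {Sub 1 2, Sub 2 1, Sub 2 2}) K34_V K34_E"
  by (rule K34_intro[where Pa="{Some (Sub 2 4), Some (Sub 1 2), Some (Sub 1 1), Some (Top 1)}" and Pb="{Some (Sub 2 1), Some (Sub 1 4)}" and Pc="{Some (Sub 2 2)}" and Qa="{Some (Top 2)}" and Qb="{Some (Sub 1 3)}" and Qc="{Some (Sub 2 3)}" and Qd="{None}", OF H_E_sym];
     (intro conn_single conn_insert)?; simp add: HS2)

lemma kmin9: "has_minor H_V (H_E {Sub 1 2, Sub 2 1, Sub 2 4}) K34_V K34_E"
  by (rule K34_intro[where Pa="{Some (Sub 2 4), Some (Sub 1 1)}" and Pb="{Some (Sub 1 2)}" and Pc="{Some (Sub 2 1), Some (Sub 1 4)}" and Qa="{Some (Top 1)}" and Qb="{Some (Sub 1 3)}" and Qc="{Some (Sub 2 3)}" and Qd="{None}", OF H_E_sym];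
     (intro conn_single conn_insert)?; simp add: HS2)

lemma kmin10: "has_minor H_V (H_E {Sub 1 2, Sub 2 2, Sub 2 4}) K34_V K34_E"
  by (rule K34_intro[where Pa="{Some (Sub 2 1), Some (Sub 1 4), Some (Top 1)}" and Pb="{Some (Sub 1 3), Some (Sub 2 2)}" and Pc="{Some (Sub 2 4), None}" and Qa="{Some (Top 2)}" and Qb="{Some (Sub 1 1)}" and Qc="{Some (Sub 1 2)}" and Qd="{Some (Sub 2 3)}", OF H_E_sym];
     (intro conn_single conn_insert)?; simp add: HS2)

lemma kmin11: "has_minor H_V (H_E {Sub 1 3, Sub 2 1, Sub 2 4}) K34_V K34_E"
  by (rule K34_intro[where Pa="{Some (Sub 2 1), Some (Sub 1 4)}" and Pb="{Some (Sub 1 3), Some (Sub 2 2)}" and Pc="{Some (Sub 2 4)}" and Qa="{Some (Sub 1 1), Some (Top 1)}" and Qb="{Some (Top 2)}" and Qc="{Some (Sub 2 3)}" and Qd="{None}", OF H_E_sym];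
     (intro conn_single conn_insert)?; simp add: HS2)

lemma kmin12: "has_minor H_V (H_E {Sub 1 4, Sub 2 2, Sub 2 4}) K34_V K34_E"
  by (rule K34_intro[where Pa="{Some (Sub 2 4), Some (Sub 1 1)}" and Pb="{Some (Sub 2 1), Some (Sub 1 4)}" and Pc="{Some (Sub 2 2)}" and Qa="{Some (Top 2)}" and Qb="{Some (Sub 1 3)}" and Qc="{Some (Sub 2 3)}" and Qd="{None}", OF H_E_sym];
     (intro conn_single conn_insert)?; simp add: HS2)

lemma kmin13: "has_minor H_V (H_E {Sub 2 1, Sub 2 2, Sub 2 4}) K34_V K34_E"
  by (rule K34_intro[where Pa="{Some (Sub 2 4), Some (Sub 1 1)}" and Pb="{Some (Sub 2 1), Some (Sub 1 4)}" and Pc="{Some (Sub 2 2)}" and Qa="{Some (Top 2)}" and Qb="{Some (Sub 1 3)}" and Qc="{Some (Sub 2 3)}" and Qd="{None}", OF H_E_sym];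
     (intro conn_single conn_insert)?; simp add: HS2)

lemma kmin14: "has_minor H_V (H_E {Top 1, Sub 1 3, Sub 2 1}) K34_V K34_E"
  by (rule K34_intro[where Pa="{Some (Top 1)}" and Pb="{Some (Sub 1 3)}" and Pc="{Some (Sub 2 1), Some (Sub 2 3)}" and Qa="{Some (Sub 2 4), Some (Sub 1 1)}" and Qb="{Some (Sub 1 2)}" and Qc="{Some (Sub 1 4)}" and Qd="{None}", OF H_E_sym];
     (intro conn_single conn_insert)?; simp add: HS2)

lemma kmin15: "has_minor H_V (H_E {Top 1, Sub 1 3, Sub 2 3}) K34_V K34_E"
  by (rule K34_intro[where Pa="{Some (Top 1)}" and Pb="{Some (Sub 1 3)}" and Pc="{Some (Sub 2 3)}" and Qa="{Some (Sub 2 4), Some (Sub 1 1)}" and Qb="{Some (Sub 1 2)}" and Qc="{Some (Sub 2 1), Some (Sub 1 4)}" and Qd="{None}", OF H_E_sym];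
     (intro conn_single conn_insert)?; simp add: HS2)

lemma kmin16: "has_minor H_V (H_E {Top 1, Sub 1 3, Sub 2 4}) K34_V K34_E"
  by (rule K34_intro[where Pa="{Some (Top 1)}" and Pb="{Some (Sub 1 3)}" and Pc="{Some (Sub 2 4), Some (Sub 2 3)}" and Qa="{Some (Sub 1 1)}" and Qb="{Some (Sub 1 2)}" and Qc="{Some (Sub 2 1), Some (Sub 1 4)}" and Qd="{None}", OF H_E_sym];
     (intro conn_single conn_insert)?; simp add: HS2)

lemma kmin17: "has_minor H_V (H_E {Top 1, Sub 2 1, Sub 2 2}) K34_V K34_E"
  by (rule K34_intro[where Pa="{None, Some (Top 1)}" and Pb="{Some (Sub 1 3)}" and Pc="{Some (Sub 2 3)}" and Qa="{Some (Sub 2 4), Some (Sub 1 1)}" and Qb="{Some (Sub 1 2)}" and Qc="{Some (Sub 2 1), Some (Sub 1 4)}" and Qd="{Some (Sub 2 2)}", OF H_E_sym];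
     (intro conn_single conn_insert)?; simp add: HS2)

lemma kmin19: "has_minor H_V (H_E {Top 1, Sub 2 2, Sub 2 4}) K34_V K34_E"
  by (rule K34_intro[where Pa="{Some (Top 1)}" and Pb="{Some (Sub 1 3), Some (Sub 2 2)}" and Pc="{Some (Sub 2 4), Some (Sub 2 3)}" and Qa="{Some (Sub 1 1)}" and Qb="{Some (Sub 1 2)}" and Qc="{Some (Sub 2 1), Some (Sub 1 4)}" and Qd="{None}", OF H_E_sym];
     (intro conn_single conn_insert)?; simp add: HS2)

lemma kmin20: "has_minor H_V (H_E {Top 1, Top 2, Sub 1 3}) K34_V K34_E"
  by (rule K34_intro[where Pa="{Some (Top 1)}" and Pb="{Some (Sub 2 3), Some (Sub 2 4), Some (Top 2)}" and Pc="{Some (Sub 1 3)}" and Qa="{Some (Sub 1 1)}" and Qb="{Some (Sub 1 2)}" and Qc="{Some (Sub 2 1), Some (Sub 1 4)}" and Qd="{None}", OF H_E_sym];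
     (intro conn_single conn_insert)?; simp add: HS2)

lemma kmin21: "has_minor H_V (H_E {Top 1, Top 2, Sub 2 3}) K34_V K34_E"
  by (rule K34_intro[where Pa="{Some (Sub 1 1), Some (Top 1)}" and Pb="{Some (Top 2)}" and Pc="{Some (Sub 2 3)}" and Qa="{Some (Sub 2 1), Some (Sub 1 4)}" and Qb="{Some (Sub 1 3), Some (Sub 2 2)}" and Qc="{Some (Sub 2 4)}" and Qd="{None}", OF H_E_sym];
     (intro conn_single conn_insert)?; simp add: HS2)

lemma kmin22: "has_minor H_V (H_E {Top 2, Sub 1 1, Sub 1 2}) K34_V K34_E"
  by (rule K34_intro[where Pa="{None, Some (Top 2)}" and Pb="{Some (Sub 1 3)}" and Pc="{Some (Sub 2 3)}" and Qa="{Some (Sub 2 4), Some (Sub 1 1)}" and Qb="{Some (Sub 1 2)}" and Qc="{Some (Sub 2 1), Some (Sub 1 4)}" and Qd="{Some (Sub 2 2)}", OF H_E_sym];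
     (intro conn_single conn_insert)?; simp add: HS2)

lemma kmin24: "has_minor H_V (H_E {Top 2, Sub 1 1, Sub 2 3}) K34_V K34_E"
  by (rule K34_intro[where Pa="{Some (Top 2)}" and Pb="{Some (Sub 1 3), Some (Sub 1 1)}" and Pc="{Some (Sub 2 3)}" and Qa="{Some (Sub 2 1), Some (Sub 1 4)}" and Qb="{Some (Sub 2 2)}" and Qc="{Some (Sub 2 4)}" and Qd="{None}", OF H_E_sym];
     (intro conn_single conn_insert)?; simp add: HS2)

lemma kmin25: "has_minor H_V (H_E {Top 2, Sub 1 2, Sub 1 4}) K34_V K34_E"
  by (rule K34_intro[where Pa="{None, Some (Top 2)}" and Pb="{Some (Sub 1 3)}" and Pc="{Some (Sub 2 3)}" and Qa="{Some (Sub 2 4), Some (Sub 1 1)}" and Qb="{Some (Sub 1 2)}" and Qc="{Some (Sub 2 1), Some (Sub 1 4)}" and Qd="{Some (Sub 2 2)}", OF H_E_sym];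
     (intro conn_single conn_insert)?; simp add: HS2)

lemma kmin26: "has_minor H_V (H_E {Top 2, Sub 1 3, Sub 2 3}) K34_V K34_E"
  by (rule K34_intro[where Pa="{Some (Top 2)}" and Pb="{Some (Sub 1 3)}" and Pc="{Some (Sub 2 3)}" and Qa="{Some (Sub 2 4), Some (Sub 1 1)}" and Qb="{Some (Sub 2 1), Some (Sub 1 4)}" and Qc="{Some (Sub 2 2)}" and Qd="{None}", OF H_E_sym];
     (intro conn_single conn_insert)?; simp add: HS2)

lemma kmin27: "has_minor H_V (H_E {Top 2, Sub 1 4, Sub 2 3}) K34_V K34_E"
  by (rule K34_intro[where Pa="{Some (Top 2)}" and Pb="{Some (Sub 1 3), Some (Sub 1 4)}" and Pc="{Some (Sub 2 3)}" and Qa="{Some (Sub 2 4), Some (Sub 1 1)}" and Qb="{Some (Sub 2 1)}" and Qc="{Some (Sub 2 2)}" and Qd="{None}", OF H_E_sym];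
     (intro conn_single conn_insert)?; simp add: HS2)

lemma qmin0: "has_minor H_V (H_E {Sub 1 1, Sub 1 4, Top 2}) Qp_V Qp_E"
  by (rule Qp_intro[where Ra="{Some (Top 2)}" and Rb="{Some (Sub 2 1)}" and Rc="{Some (Sub 2 4)}" and Rd="{Some (Sub 1 2), Some (Sub 2 3)}" and Re="{None}" and Rf="{Some (Sub 1 4)}" and Rg="{Some (Sub 1 1)}" and Rh="{Some (Top 1)}" and Ri="{Some (Sub 1 3)}", OF H_E_sym];
     (intro conn_single conn_insert)?; simp add: HS2)

lemma qmin1: "has_minor H_V (H_E {Sub 2 1, Sub 2 4, Top 1}) Qp_V Qp_E"
  by (rule Qp_intro[where Ra="{Some (Top 1)}" and Rb="{Some (Sub 1 1)}" and Rc="{Some (Sub 1 4)}" and Rd="{Some (Sub 1 3), Some (Sub 2 2)}" and Re="{None}" and Rf="{Some (Sub 2 4)}" and Rg="{Some (Sub 2 1)}" and Rh="{Some (Top 2)}" and Ri="{Some (Sub 2 3)}", OF H_E_sym];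
     (intro conn_single conn_insert)?; simp add: HS2)

lemmas kmins = kmin0 kmin1 kmin2 kmin3 kmin4 kmin5 kmin6 kmin7 kmin8 kmin9 kmin10 kmin11 kmin12 kmin13 kmin14 kmin15 kmin16 kmin17 kmin19 kmin20 kmin21 kmin22 kmin24 kmin25 kmin26 kmin27

lemma main1:
  assumes "a \<in> F4_V" "b \<in> F4_V" "c \<in> F4_V" "a \<noteq> b" "b \<noteq> c" "a \<noteq> c"
    "\<not> (\<exists>x\<in>{a,b,c}. \<exists>y\<in>{a,b,c}. F4_E x y)"
    "{a,b,c} \<noteq> {Sub 1 1, Sub 1 4, Top 2}" "{a,b,c} \<noteq> {Sub 2 1, Sub 2 4, Top 1}"
  shows "has_minor H_V (H_E {a,b,c}) K34_V K34_E"
  using assms kmins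
  apply (simp only: F4_V_eq insert_iff empty_iff)
  apply (elim disjE)
  apply (simp_all add: F4_E_eq F4_edges_eq insert_commute)
  done

theorem lemma4p12:
  fixes S :: "f4v set"
  assumes "S \<subseteq> F4_V" and "card S = 3"
  shows "(\<not> has_minor H_V (H_E S) K34_V K34_E \<longrightarrow>
            (\<exists>a\<in>S. \<exists>b\<in>S. F4_E a b) \<or>
            S = {Sub 1 1, Sub 1 4, Top 2} \<or> S = {Sub 2 1, Sub 2 4, Top 1})
       \<and> ((S = {Sub 1 1, Sub 1 4, Top 2} \<or> S = {Sub 2 1, Sub 2 4, Top 1}) \<longrightarrow>
            has_minor H_V (H_E S) Qp_V Qp_E)"
proof -
  obtain a b c where S: "S = {a,b,c}" and d: "a \<noteq> b" "b \<noteq> c" "a \<noteq> c"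
    using assms(2)[unfolded card_3_iff] by blast
  have m: "a \<in> F4_V" "b \<in> F4_V" "c \<in> F4_V" using assms(1) S by auto
  show ?thesis
  proof (intro conjI impI)
    assume "\<not> has_minor H_V (H_E S) K34_V K34_E"
    then show "(\<exists>a\<in>S. \<exists>b\<in>S. F4_E a b) \<or>
            S = {Sub 1 1, Sub 1 4, Top 2} \<or> S = {Sub 2 1, Sub 2 4, Top 1}"
      using main1[OF m d] S by blast
  next
    assume "S = {Sub 1 1, Sub 1 4, Top 2} \<or> S = {Sub 2 1, Sub 2 4, Top 1}"
    then show "has_minor H_V (H_E S) Qp_V Qp_E" using qmin0 qmin1 by blast
  qed
qed

end
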